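(* Let $\mathcal{G}=(\mathcal{V},\mathcal{E})$ be a strongly connected digraph with $n$ nodes $v_1,\dots,v_n$, where node $v_j$ has out-degree $d_j^+$ and arbitrary initial value $x_j[0]\in\mathbb{R}$, and $y_j[0]=1$. Consider the ARQ-based Ratio Consensus iteration written in augmented form $$\tilde{x}[k+1]=\Xi[k]\,\tilde{x}[k],\qquad \tilde{y}[k+1]=\Xi[k]\,\tilde{y}[k],\qquad k=0,1,2,\dots,$$ where $\tilde x[k],\tilde y[k]\in\mathbb{R}^{\tilde n}$, $\tilde n\ge n$, the first $n$ coordinates correspond to the actual nodes and are initialized as $\tilde x_j[0]=x_j[0]$, $\tilde y_j[0]=1$ for $j=1,\dots,n$, while all remaining (virtual-node) coordinates are initialized to $0$. Assume the random matrices $\Xi[k]$ satisfy the standing assumptions (A1)–(A3) below. For each actual node $v_j$ let $\mathcal{K}_j=\{k\ge 0:\ \tilde y_j[k]\ge c^{\lambda}\}$ and, for $k\in\mathcal{K}_j$, let $z_j[k]=\tilde x_j[k]/\tilde y_j[k]$. Then, with probability $1$, for every $v_j\in\mathcal{V}$ the set $\mathcal{K}_j$ is infinite and $$\lim_{k\to\infty,\ k\in\mathcal{K}_j} z_j[k]=\frac{1}{n}\sum_{i=1}^{n}x_i[0].$$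
   Context: Model: the augmented digraph adds, for each edge $(v_j,v_i)\in\mathcal{E}$ (meaning $v_j$ receives from $v_i$), $\bar\tau$ virtual "delay" nodes (holding information that will arrive at $v_j$ after $r=1,\dots,\bar\tau$ steps, where $\bar\tau$ is the ARQ retransmission limit and upper bound on delays) and one virtual "buffer" node (holding mass lost due to packet drops, released later), so $\tilde n=|\mathcal{E}|(\bar\tau+1)+n$. The weights used by node $v_j$ on its out-going links and self-loop are $p_{lj}=1/(1+d_j^+)$ for $v_l\in\mathcal{N}_j^+\cup\{v_j\}$ and $0$ otherwise. Standing assumptions on the random matrices $\Xi[k]\in\mathbb{R}_+^{\tilde n\times\tilde n}$, which encode the realized retransmission delays and packet drops at step $k$: (A1) Each $\Xi[k]$ takes values in a fixed finite set $\mathcal{X}$ of nonnegative column-stochastic $\tilde n\times\tilde n$ matrices, every entry of which is $0$, $1$, or $1/(1+d_j^+)$ for some $j$; hence every positive entry is at least $c:=\min_{j}1/(1+d_j^+)$. (A2) There exist a positive integer $\lambda$, matrices $\Xi_1,\dots,\Xi_\lambda\in\mathcal{X}$ and a constant $p_{\min}>0$ such that the product $L=\Xi_\lambda\Xi_{\lambda-1}\cdots\Xi_1$ satisfies $L(j,i)>0$ for every $j\in\{1,\dots,n\}$ and every $i\in\{1,\dots,\tilde n\}$ (all entries in the rows of the actual nodes are strictly positive). (A3) For every $k\ge 0$, conditionally on the past realizations $\Xi[0],\dots,\Xi[k]$, the event $\{\Xi[k+1]=\Xi_1,\ \Xi[k+2]=\Xi_2,\dots,\Xi[k+\lambda]=\Xi_\lambda\}$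 has probability at least $p_{\min}$. *)

theory Defs
  imports "HOL-Probability.Probability"
begin

text \<open>Matrices of size N x N are represented as functions nat => nat => real
  whose entries vanish outside the index range {0..<N}.\<close>

type_synonym rmat = "nat \<Rightarrow> nat \<Rightarrow> real"

definition supported_mat :: "nat \<Rightarrow> rmat \<Rightarrow> bool" where
  "supported_mat N A \<longleftrightarrow> (\<forall>l i. (l \<ge> N \<or> i \<ge> N) \<longrightarrow> A l i = 0)"

definition nonneg_col_stochastic :: "nat \<Rightarrow> rmat \<Rightarrow> bool" where
  "nonneg_col_stochastic N A \<longleftrightarrow> supported_mat N A \<and>
     (\<forall>l<N. \<forall>i<N. 0 \<le> A l i) \<and> (\<forall>i<N. (\<Sum>l<N. A l i) = 1)"

definition mat_mult :: "nat \<Rightarrow> rmat \<Rightarrow> rmat \<Rightarrow> rmat" where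
  "mat_mult N A B = (\<lambda>l i. if l < N \<and> i < N then (\<Sum>m<N. A l m * B m i) else 0)"

definition mat_id :: "nat \<Rightarrow> rmat" where
  "mat_id N = (\<lambda>l i. if l < N \<and> i < N \<and> l = i then 1 else 0)"

fun mat_prod :: "nat \<Rightarrow> (nat \<Rightarrow> rmat) \<Rightarrow> nat \<Rightarrow> rmat" where
  "mat_prod N Xs 0 = mat_id N"
| "mat_prod N Xs (Suc m) = mat_mult N (Xs (Suc m)) (mat_prod N Xs m)"

text \<open>Out-degree of node j: number of out-neighbours l, i.e. edges (v_l, v_j)
  (v_l receives from v_j).\<close>
definition out_deg :: "(nat \<times> nat) set \<Rightarrow> nat \<Rightarrow> nat" where
  "out_deg E j = card {l. (l, j) \<in> E}"

definition strongly_connected :: "nat \<Rightarrow> (nat \<times> nat) set \<Rightarrow> bool" where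
  "strongly_connected n E \<longleftrightarrow> E \<subseteq> {0..<n} \<times> {0..<n} \<and> (\<forall>i. (i, i) \<notin> E) \<and>
     (\<forall>i<n. \<forall>j<n. (i, j) \<in> E\<^sup>*)"

fun aug_iter :: "nat \<Rightarrow> (nat \<Rightarrow> 'a \<Rightarrow> rmat) \<Rightarrow> (nat \<Rightarrow> real) \<Rightarrow> nat \<Rightarrow> 'a \<Rightarrow> nat \<Rightarrow> real" where
  "aug_iter N Xi v0 0 \<omega> = (\<lambda>l. if l < N then v0 l else 0)"
| "aug_iter N Xi v0 (Suc k) \<omega> = (\<lambda>l. if l < N then (\<Sum>i<N. Xi k \<omega> l i * aug_iter N Xi v0 k \<omega> i) else 0)"

end

theory Submission
  imports Defs
begin


definition mv :: "nat \<Rightarrow> rmat \<Rightarrow> (nat \<Rightarrow> real) \<Rightarrow> nat \<Rightarrow> real" where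
  "mv N A v = (\<lambda>l. if l < N then (\<Sum>i<N. A l i * v i) else 0)"

fun itr :: "nat \<Rightarrow> (nat \<Rightarrow> rmat) \<Rightarrow> (nat \<Rightarrow> real) \<Rightarrow> nat \<Rightarrow> nat \<Rightarrow> real" where
  "itr N B v 0 = v"
| "itr N B v (Suc k) = mv N (B k) (itr N B v k)"

definition supp :: "nat \<Rightarrow> (nat \<Rightarrow> real) \<Rightarrow> bool" where
  "supp N v \<longleftrightarrow> (\<forall>l\<ge>N. v l = 0)"

definition sm :: "nat \<Rightarrow> (nat \<Rightarrow> real) \<Rightarrow> real" where
  "sm N v = (\<Sum>l<N. v l)"

definition nrm :: "nat \<Rightarrow> (nat \<Rightarrow> real) \<Rightarrow> real" where
  "nrm N v = (\<Sum>l<N. \<bar>v l\<bar>)"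

lemma aug_itr: "aug_iter N Xi v0 k \<omega> = itr N (\<lambda>k. Xi k \<omega>) (\<lambda>l. if l < N then v0 l else 0) k"
  by (induction k) (simp_all add: mv_def cong: if_cong)

lemma itr_shift: "itr N B v (a+m) = itr N (\<lambda>r. B (a+r)) (itr N B v a) m"
  by (induction m) simp_all

lemma itr_cong: "(\<forall>r<m. B r = B' r) \<Longrightarrow> itr N B v m = itr N B' v m"
  by (induction m) auto

lemma supp_mv: "supp N (mv N A v)"
  by (simp add: supp_def mv_def)

lemma mv_assoc: "mv N (mat_mult N A B) v = mv N A (mv N B v)"
proof (rule ext)
  fix l
  show "mv N (mat_mult N A B) v l = mv N A (mv N B v) l"
  proof (cases "l < N")
    case True
    have "mv N (mat_mult N A B) v l = (\<Sum>i<N. (\<Sum>m<N. A l m * B m i) * v i)"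
      using True by (auto simp: mv_def mat_mult_def intro!: sum.cong)
    also have "\<dots> = (\<Sum>i<N. \<Sum>m<N. A l m * B m i * v i)" by (simp add: sum_distrib_right)
    also have "\<dots> = (\<Sum>m<N. \<Sum>i<N. A l m * B m i * v i)" by (rule sum.swap)
    also have "\<dots> = (\<Sum>m<N. A l m * (\<Sum>i<N. B m i * v i))" by (simp add: sum_distrib_left mult.assoc)
    also have "\<dots> = mv N A (mv N B v) l"
      using True by (auto simp: mv_def intro!: sum.cong)
    finally show ?thesis .
  qed (simp add: mv_def)
qed

lemma mv_id: "supp N v \<Longrightarrow> mv N (mat_id N) v = v"
proof (rule ext)
  fix l assume s: "supp N v"
  show "mv N (mat_id N) v l = v l"
  proof (cases "l < N")
    case True
    have "(\<Sum>i<N. mat_id N l i * v i) = (\<Sum>i<N. if i = l then v l else 0)"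
      using True by (intro sum.cong) (auto simp: mat_id_def)
    also have "\<dots> = v l" using True by (subst sum.delta) auto
    finally show ?thesis using True by (simp add: mv_def)
  qed (use s in \<open>simp add: mv_def supp_def\<close>)
qed

lemma itr_prod: "supp N v \<Longrightarrow> itr N (\<lambda>r. Xs (Suc r)) v m = mv N (mat_prod N Xs m) v"
  by (induction m) (simp_all add: mv_id mv_assoc)

lemma ncs_nonneg: "nonneg_col_stochastic N A \<Longrightarrow> 0 \<le> A l i"
  unfolding nonneg_col_stochastic_def supported_mat_def
  by (metis linorder_not_le order_refl)

lemma ncs_col: "nonneg_col_stochastic N A \<Longrightarrow> i < N \<Longrightarrow> (\<Sum>l<N. A l i) = 1"
  unfolding nonneg_col_stochastic_def by blast

lemma sm_mv: assumes "nonneg_col_stochastic N A" shows "sm N (mv N A v) = sm N v"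
proof -
  have "sm N (mv N A v) = (\<Sum>l<N. \<Sum>i<N. A l i * v i)" by (simp add: sm_def mv_def)
  also have "\<dots> = (\<Sum>i<N. \<Sum>l<N. A l i * v i)" by (rule sum.swap)
  also have "\<dots> = (\<Sum>i<N. v i * (\<Sum>l<N. A l i))" by (simp add: sum_distrib_left mult.commute)
  also have "\<dots> = sm N v" using ncs_col[OF assms] by (simp add: sm_def)
  finally show ?thesis .
qed

lemma nrm_mv: assumes "nonneg_col_stochastic N A" shows "nrm N (mv N A v) \<le> nrm N v"
proof -
  have "nrm N (mv N A v) = (\<Sum>l<N. \<bar>\<Sum>i<N. A l i * v i\<bar>)" by (simp add: nrm_def mv_def)
  also have "\<dots> \<le> (\<Sum>l<N. \<Sum>i<N. A l i * \<bar>v i\<bar>)"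
    by (intro sum_mono order.trans[OF sum_abs]) (simp add: abs_mult ncs_nonneg[OF assms])
  also have "\<dots> = (\<Sum>i<N. \<Sum>l<N. A l i * \<bar>v i\<bar>)" by (rule sum.swap)
  also have "\<dots> = (\<Sum>i<N. \<bar>v i\<bar> * (\<Sum>l<N. A l i))" by (simp add: sum_distrib_left mult.commute)
  also have "\<dots> = nrm N v" using ncs_col[OF assms] by (simp add: nrm_def)
  finally show ?thesis .
qed

lemma nrm_mv_contr:
  assumes A: "nonneg_col_stochastic N A" and j0: "j0 < N" and g: "\<forall>i<N. g \<le> A j0 i"
    and s: "sm N v = 0"
  shows "nrm N (mv N A v) \<le> (1 - g) * nrm N v"
proof -
  define f where "f l = (\<Sum>i<N. (A l i - (if l = j0 then g else 0)) * \<bar>v i\<bar>)" for l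
  have pt: "\<bar>\<Sum>i<N. A l i * v i\<bar> \<le> f l" if l: "l < N" for l
  proof (cases "l = j0")
    case True
    have "(\<Sum>i<N. A l i * v i) = (\<Sum>i<N. (A l i - g) * v i) + g * (\<Sum>i<N. v i)"
      by (simp add: algebra_simps sum.distrib sum_distrib_left sum_subtractf)
    also have "\<dots> = (\<Sum>i<N. (A l i - g) * v i)" using s by (simp add: sm_def)
    finally have "\<bar>\<Sum>i<N. A l i * v i\<bar> = \<bar>\<Sum>i<N. (A l i - g) * v i\<bar>" by simp
    also have "\<dots> \<le> (\<Sum>i<N. (A l i - g) * \<bar>v i\<bar>)"
      by (intro order.trans[OF sum_abs] sum_mono) (use g True in \<open>simp add: abs_mult\<close>)
    finally show ?thesis using True by (simp add: f_def)
  next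
    case False
    show ?thesis unfolding f_def using False
      by (intro order.trans[OF sum_abs] sum_mono) (simp add: abs_mult ncs_nonneg[OF A])
  qed
  have "nrm N (mv N A v) = (\<Sum>l<N. \<bar>\<Sum>i<N. A l i * v i\<bar>)" by (simp add: nrm_def mv_def)
  also have "\<dots> \<le> (\<Sum>l<N. f l)" by (intro sum_mono pt) simp
  also have "\<dots> = (\<Sum>i<N. \<Sum>l<N. (A l i - (if l = j0 then g else 0)) * \<bar>v i\<bar>)"
    unfolding f_def by (rule sum.swap)
  also have "\<dots> = (\<Sum>i<N. \<bar>v i\<bar> * ((\<Sum>l<N. A l i) - (\<Sum>l<N. (if l = j0 then g else 0))))"
    by (simp add: sum_distrib_left sum_subtractf algebra_simps del: sum.delta)
  also have "\<dots> = (\<Sum>i<N. \<bar>v i\<bar> * (1 - g))"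
    using j0 ncs_col[OF A] by (intro sum.cong) auto
  also have "\<dots> = (1 - g) * nrm N v" by (simp add: nrm_def sum_distrib_left mult.commute)
  finally show ?thesis .
qed

lemma mv_nonneg: "nonneg_col_stochastic N A \<Longrightarrow> (\<forall>i. 0 \<le> v i) \<Longrightarrow> 0 \<le> mv N A v l"
  unfolding mv_def using ncs_nonneg[of N A] by (auto intro!: sum_nonneg mult_nonneg_nonneg)

lemma ncs_mult:
  assumes A: "nonneg_col_stochastic N A" and B: "nonneg_col_stochastic N B"
  shows "nonneg_col_stochastic N (mat_mult N A B)"
proof -
  have "(\<Sum>l<N. mat_mult N A B l i) = 1" if i: "i < N" for i
  proof -
    have "(\<Sum>l<N. mat_mult N A B l i) = (\<Sum>l<N. \<Sum>m<N. A l m * B m i)"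
      using i by (simp add: mat_mult_def)
    also have "\<dots> = (\<Sum>m<N. \<Sum>l<N. A l m * B m i)" by (rule sum.swap)
    also have "\<dots> = (\<Sum>m<N. B m i * (\<Sum>l<N. A l m))" by (simp add: sum_distrib_left mult.commute)
    also have "\<dots> = (\<Sum>m<N. B m i)" using ncs_col[OF A] by simp
    also have "\<dots> = 1" using ncs_col[OF B i] .
    finally show ?thesis .
  qed
  moreover have "0 \<le> mat_mult N A B l i" for l i
    unfolding mat_mult_def using ncs_nonneg[OF A] ncs_nonneg[OF B] by (auto intro!: sum_nonneg mult_nonneg_nonneg)
  ultimately show ?thesis
    by (auto simp: nonneg_col_stochastic_def supported_mat_def mat_mult_def
        intro!: sum_nonneg mult_nonneg_nonneg ncs_nonneg[OF A] ncs_nonneg[OF B])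
qed

lemma ncs_id: "nonneg_col_stochastic N (mat_id N)"
proof -
  have "(\<Sum>l<N. mat_id N l i) = 1" if "i < N" for i
  proof -
    have "(\<Sum>l<N. mat_id N l i) = (\<Sum>l<N. if l = i then 1 else 0)"
      using that by (auto simp: mat_id_def intro!: sum.cong)
    then show ?thesis using that by simp
  qed
  then show ?thesis by (auto simp: nonneg_col_stochastic_def supported_mat_def mat_id_def)
qed

lemma ncs_prod: "(\<forall>r\<in>{1..m}. nonneg_col_stochastic N (Xs r)) \<Longrightarrow> nonneg_col_stochastic N (mat_prod N Xs m)"
  by (induction m) (auto intro!: ncs_mult ncs_id)

lemma prod_entries:
  assumes c: "0 < c" "c \<le> 1"
    and X: "\<forall>r\<in>{1..m}. nonneg_col_stochastic N (Xs r) \<and> (\<forall>l i. Xs r l i = 0 \<or> c \<le> Xs r l i)"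
  shows "mat_prod N Xs m l i = 0 \<or> c ^ m \<le> mat_prod N Xs m l i"
  using X
proof (induction m arbitrary: l i)
  case 0
  then show ?case by (simp add: mat_id_def)
next
  case (Suc m)
  let ?X = "Xs (Suc m)" and ?P = "mat_prod N Xs m"
  have IH: "\<And>l i. ?P l i = 0 \<or> c ^ m \<le> ?P l i" using Suc by auto
  have Xc: "nonneg_col_stochastic N ?X" "\<forall>l i. ?X l i = 0 \<or> c \<le> ?X l i" using Suc.prems by auto
  have Pc: "nonneg_col_stochastic N ?P" using Suc.prems by (intro ncs_prod) auto
  show ?case
  proof (cases "mat_prod N Xs (Suc m) l i = 0")
    case False
    then have li: "l < N" "i < N" and ne: "(\<Sum>p<N. ?X l p * ?P p i) \<noteq> 0"
      by (auto simp: mat_mult_def split: if_splits)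
    then obtain p where p: "p < N" "?X l p * ?P p i \<noteq> 0"
      by (meson sum.neutral lessThan_iff)
    have "?X l p \<ge> c" using Xc(2) p(2) by (metis mult_zero_left)
    moreover have "?P p i \<ge> c ^ m" using IH p(2) by (metis mult_zero_right)
    ultimately have t: "c ^ Suc m \<le> ?X l p * ?P p i"
      using c by (simp add: mult_mono mult.commute)
    also have "\<dots> \<le> (\<Sum>p<N. ?X l p * ?P p i)"
      using p(1) by (intro member_le_sum) (auto intro!: mult_nonneg_nonneg ncs_nonneg[OF Xc(1)] ncs_nonneg[OF Pc])
    finally show ?thesis using li by (simp add: mat_mult_def)
  qed simp
qed



lemma itr_supp: "supp N v \<Longrightarrow> supp N (itr N B v k)"
  by (cases k) (simp_all add: supp_mv)

lemma itr_lin: "itr N B (\<lambda>l. a l - c * b l) k = (\<lambda>l. itr N B a k l - c * itr N B b k l)"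
proof (induction k)
  case (Suc k)
  show ?case
    by (simp add: Suc mv_def fun_eq_iff sum_subtractf sum_distrib_left right_diff_distrib mult.left_commute)
qed simp

lemma determ:
  fixes B Xs :: "nat \<Rightarrow> rmat" and x0 :: "nat \<Rightarrow> real" and g :: real
  assumes ncsB: "\<And>k. nonneg_col_stochastic N (B k)"
    and ncsX: "\<forall>r\<in>{1..lam}. nonneg_col_stochastic N (Xs r)"
    and Lrow: "\<forall>j<n. \<forall>i<N. g \<le> mat_prod N Xs lam j i"
    and g: "0 < g" "g \<le> 1" and n: "1 \<le> n" "n \<le> N"
    and blk: "\<forall>k0. \<exists>k\<ge>k0. \<forall>r<lam. B (Suc k + r) = Xs (Suc r)"
    and j: "j < n"
    and xv: "xv = (\<lambda>l. if l < N then (if l < n then x0 l else 0) else 0)"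
    and yv: "yv = (\<lambda>l. if l < N then (if l < n then 1 else 0) else 0)"
  shows "infinite {k. g \<le> itr N B yv k j} \<and>
     ((\<lambda>k. itr N B xv k j / itr N B yv k j) \<longlongrightarrow> (\<Sum>i<n. x0 i) / real n)
        (inf sequentially (principal {k. g \<le> itr N B yv k j}))"
proof -
  define L where "L = mat_prod N Xs lam"
  define avg where "avg = (\<Sum>i<n. x0 i) / real n"
  have jN: "j < N" using j n by simp
  have ncsL: "nonneg_col_stochastic N L" unfolding L_def by (rule ncs_prod[OF ncsX])
  have step: "\<exists>k\<ge>k0. \<forall>v. supp N v \<longrightarrow> itr N B v (Suc k + lam) = mv N L (itr N B v (Suc k))" for k0
  proof -
    obtain k where k: "k \<ge> k0" "\<forall>r<lam. B (Suc k + r) = Xs (Suc r)" using blk by blast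
    have "itr N B v (Suc k + lam) = mv N L (itr N B v (Suc k))" if "supp N v" for v
    proof -
      have "itr N B v (Suc k + lam) = itr N (\<lambda>r. B (Suc k + r)) (itr N B v (Suc k)) lam"
        by (rule itr_shift)
      also have "\<dots> = itr N (\<lambda>r. Xs (Suc r)) (itr N B v (Suc k)) lam"
        using k(2) by (intro itr_cong) auto
      also have "\<dots> = mv N L (itr N B v (Suc k))"
        unfolding L_def by (rule itr_prod) (simp add: supp_mv)
      finally show ?thesis .
    qed
    then show ?thesis using k(1) by blast
  qed
  have suppx: "supp N xv" and suppy: "supp N yv" by (auto simp: supp_def xv yv)
  have ynn: "0 \<le> itr N B yv k l" for k l
  proof (induction k arbitrary: l)
    case 0 then show ?case by (simp add: yv)
  next
    case (Suc k) then show ?case by (simp add: mv_nonneg[OF ncsB])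
  qed
  have smy0: "sm N yv = real n"
  proof -
    have "sm N yv = (\<Sum>l<N. if l < n then 1 else 0)" by (simp add: sm_def yv)
    also have "\<dots> = (\<Sum>l<n. if l < n then 1 else 0)"
      by (rule sum.mono_neutral_right) (use n in auto)
    finally show ?thesis by simp
  qed
  have smy: "sm N (itr N B yv k) = real n" for k
    by (induction k) (simp_all add: smy0 sm_mv[OF ncsB])
  define wv where "wv = (\<lambda>l. xv l - avg * yv l)"
  define W where "W k = itr N B wv k" for k
  have Wx: "W k l = itr N B xv k l - avg * itr N B yv k l" for k l
    unfolding W_def wv_def itr_lin by simp
  have suppw: "supp N wv" using suppx suppy by (simp add: supp_def wv_def)
  have smw0: "sm N wv = 0"
  proof -
    have "sm N xv = (\<Sum>l<N. if l < n then x0 l else 0)" by (simp add: sm_def xv)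
    also have "\<dots> = (\<Sum>l<n. if l < n then x0 l else 0)"
      by (rule sum.mono_neutral_right) (use n in auto)
    finally have sx: "sm N xv = (\<Sum>i<n. x0 i)" by simp
    have "sm N wv = sm N xv - avg * sm N yv"
      by (simp add: sm_def wv_def sum_subtractf sum_distrib_left)
    then show ?thesis using sx smy0 n by (simp add: avg_def)
  qed
  have smw: "sm N (W k) = 0" for k
    unfolding W_def by (induction k) (simp_all add: smw0 sm_mv[OF ncsB])
  have Wdec: "nrm N (W b) \<le> nrm N (W a)" if "a \<le> b" for a b
  proof -
    have "decseq (\<lambda>k. nrm N (W k))"
      by (rule decseq_SucI) (simp add: W_def nrm_mv[OF ncsB])
    then show ?thesis using that by (simp add: decseq_def)
  qed
  have L0: "\<forall>i<N. g \<le> L 0 i" using Lrow n unfolding L_def by auto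
  have geo: "\<exists>T. \<forall>k\<ge>T. nrm N (W k) \<le> (1 - g) ^ m * nrm N (W 0)" for m
  proof (induction m)
    case 0
    show ?case using Wdec by auto
  next
    case (Suc m)
    then obtain T where T: "\<forall>k\<ge>T. nrm N (W k) \<le> (1 - g) ^ m * nrm N (W 0)" by blast
    obtain k where k: "k \<ge> T" "\<forall>v. supp N v \<longrightarrow> itr N B v (Suc k + lam) = mv N L (itr N B v (Suc k))"
      using step by blast
    have "nrm N (W (Suc k + lam)) = nrm N (mv N L (W (Suc k)))"
      using k(2) suppw by (simp add: W_def)
    also have "\<dots> \<le> (1 - g) * nrm N (W (Suc k))"
      by (rule nrm_mv_contr[OF ncsL _ L0 smw]) (use n in simp)
    also have "\<dots> \<le> (1 - g) * ((1 - g) ^ m * nrm N (W 0))"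
      using T k(1) g by (intro mult_left_mono) auto
    finally have *: "nrm N (W (Suc k + lam)) \<le> (1 - g) ^ Suc m * nrm N (W 0)" by simp
    show ?case
      by (rule exI[of _ "Suc k + lam"]) (use * Wdec in \<open>blast intro: order.trans\<close>)
  qed
  have nrmnn: "0 \<le> nrm N v" for v by (simp add: nrm_def sum_nonneg)
  have small: "\<exists>T. \<forall>k\<ge>T. nrm N (W k) < e" if e: "e > 0" for e
  proof -
    obtain m where m: "(1 - g) ^ m < e / (nrm N (W 0) + 1)"
      using real_arch_pow_inv[of "e / (nrm N (W 0) + 1)" "1 - g"] e g nrmnn[of "W 0"] by auto
    obtain T where T: "\<forall>k\<ge>T. nrm N (W k) \<le> (1 - g) ^ m * nrm N (W 0)" using geo by blast
    have "(1 - g) ^ m * nrm N (W 0) \<le> (1 - g) ^ m * (nrm N (W 0) + 1)"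
      using g by (intro mult_left_mono) auto
    also have "\<dots> < e" using m nrmnn[of "W 0"] by (simp add: field_simps)
    finally show ?thesis using T by force
  qed
  define K where "K = {k. g \<le> itr N B yv k j}"
  have inf: "infinite K"
    unfolding infinite_nat_iff_unbounded_le
  proof
    fix m
    obtain k where k: "k \<ge> m" "\<forall>v. supp N v \<longrightarrow> itr N B v (Suc k + lam) = mv N L (itr N B v (Suc k))"
      using step by blast
    have "itr N B yv (Suc k + lam) j = (\<Sum>i<N. L j i * itr N B yv (Suc k) i)"
      using k(2) suppy jN by (simp add: mv_def)
    also have "\<dots> \<ge> (\<Sum>i<N. g * itr N B yv (Suc k) i)"
      using Lrow j ynn[of "Suc k"] unfolding L_def by (intro sum_mono mult_right_mono) auto
    moreover have "(\<Sum>i<N. g * itr N B yv (Suc k) i) = g * real n"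
      using smy[of "Suc k"] by (simp only: sm_def sum_distrib_left[symmetric])
    ultimately have "g * real n \<le> itr N B yv (Suc k + lam) j" by linarith
    moreover have "g \<le> g * real n" using g n by simp
    ultimately show "\<exists>k'\<ge>m. k' \<in> K" using k(1) unfolding K_def
      by (intro exI[of _ "Suc k + lam"]) auto
  qed
  have lim: "((\<lambda>k. itr N B xv k j / itr N B yv k j) \<longlongrightarrow> avg) (inf sequentially (principal K))"
  proof (rule tendstoI)
    fix e :: real assume e: "e > 0"
    obtain T where T: "\<forall>k\<ge>T. nrm N (W k) < e * g" using small[of "e * g"] e g by auto
    show "\<forall>\<^sub>F k in inf sequentially (principal K). dist (itr N B xv k j / itr N B yv k j) avg < e"
      unfolding eventually_inf_principal eventually_sequentially
    proof (intro exI allI impI)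
      fix k assume kT: "T \<le> k" and kK: "k \<in> K"
      let ?x = "itr N B xv k j" and ?y = "itr N B yv k j"
      have y: "g \<le> ?y" using kK by (simp add: K_def)
      then have yp: "?y > 0" using g by simp
      have "\<bar>W k j\<bar> \<le> nrm N (W k)" unfolding nrm_def using jN
        by (intro member_le_sum) auto
      also have "\<dots> < e * g" using T kT by auto
      also have "\<dots> \<le> e * ?y" using y e by simp
      finally have "\<bar>?x - avg * ?y\<bar> < e * ?y" by (simp add: Wx)
      then have "\<bar>?x / ?y - avg\<bar> < e" using yp
        by (simp add: abs_less_iff field_simps)
      then show "dist (?x / ?y) avg < e" by (simp add: dist_real_def)
    qed
  qed
  show ?thesis using inf lim unfolding K_def avg_def by simp
qed



lemma meas_fin:
  assumes meas: "\<forall>k A. {\<omega>\<in>space M. Xi k \<omega> = A} \<in> sets M" and fin: "finite I"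
  shows "{\<omega>\<in>space M. \<forall>r\<in>I. Xi (h r) \<omega> = f r} \<in> sets M"
  using fin
proof (induction I rule: finite_induct)
  case empty then show ?case by simp
next
  case (insert x I)
  have "{\<omega>\<in>space M. \<forall>r\<in>insert x I. Xi (h r) \<omega> = f r} =
        {\<omega>\<in>space M. Xi (h x) \<omega> = f x} \<inter> {\<omega>\<in>space M. \<forall>r\<in>I. Xi (h r) \<omega> = f r}" by auto
  then show ?case using insert meas by auto
qed

lemma (in prob_space) cond_step:
  fixes Xi :: "nat \<Rightarrow> 'a \<Rightarrow> rmat" and G :: "(nat \<Rightarrow> rmat) \<Rightarrow> bool"
  assumes XX_fin: "finite XX"
    and Xi_vals: "\<forall>k. \<forall>\<omega>\<in>space M. Xi k \<omega> \<in> XX"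
    and Xi_meas: "\<forall>k A. {\<omega>\<in>space M. Xi k \<omega> = A} \<in> sets M"
    and A3: "\<forall>k (Ps :: nat \<Rightarrow> rmat).
       measure M {\<omega>\<in>space M. (\<forall>i\<le>k. Xi i \<omega> = Ps i) \<and> (\<forall>r\<in>{1..lam}. Xi (k + r) \<omega> = Xs r)}
         \<ge> pmin * measure M {\<omega>\<in>space M. \<forall>i\<le>k. Xi i \<omega> = Ps i}"
    and pmin: "pmin > 0"
    and loc: "\<And>P Q. (\<forall>i\<le>k. P i = Q i) \<Longrightarrow> G P = G Q"
  shows "measure M {\<omega>\<in>space M. G (\<lambda>i. Xi i \<omega>) \<and> (\<forall>r\<in>{1..lam}. Xi (k + r) \<omega> = Xs r)}
         \<ge> pmin * measure M {\<omega>\<in>space M. G (\<lambda>i. Xi i \<omega>)}"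
proof -
  define S where "S = {Ps \<in> Pi\<^sub>E {..k} (\<lambda>_. XX). G Ps}"
  define C where "C Ps = {\<omega>\<in>space M. \<forall>i\<in>{..k}. Xi i \<omega> = Ps i}" for Ps
  define Bset where "Bset = {\<omega>\<in>space M. \<forall>r\<in>{1..lam}. Xi (k + r) \<omega> = Xs r}"
  define D where "D Ps = C Ps \<inter> Bset" for Ps
  have finPi: "finite (Pi\<^sub>E {..k} (\<lambda>_. XX))" by (rule finite_PiE) (simp_all add: XX_fin)
  have finS: "finite S" unfolding S_def by (rule finite_subset[OF _ finPi]) blast
  have Cs: "C Ps \<in> sets M" for Ps
    unfolding C_def by (rule meas_fin[OF Xi_meas]) simp
  have Bsets: "Bset \<in> sets M"
    unfolding Bset_def using meas_fin[OF Xi_meas, of "{1..lam}" "\<lambda>r. k + r" Xs] by simp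
  have Ds: "D Ps \<in> sets M" for Ps unfolding D_def using Cs Bsets by auto
  have eqC: "{\<omega>\<in>space M. G (\<lambda>i. Xi i \<omega>)} = (\<Union>Ps\<in>S. C Ps)"
  proof (intro equalityI subsetI)
    fix \<omega> assume w: "\<omega> \<in> {\<omega>\<in>space M. G (\<lambda>i. Xi i \<omega>)}"
    let ?P = "restrict (\<lambda>i. Xi i \<omega>) {..k}"
    have "G ?P" using w loc[of ?P "\<lambda>i. Xi i \<omega>"] by auto
    have wsp: "\<omega> \<in> space M" using w by simp
    have "\<forall>i\<in>{..k}. Xi i \<omega> \<in> XX" using Xi_vals wsp by blast
    then have "?P \<in> Pi\<^sub>E {..k} (\<lambda>_. XX)" by (simp only: restrict_PiE_iff)
    moreover note \<open>G ?P\<close>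
    ultimately have "?P \<in> S" by (simp add: S_def)
    moreover have "\<omega> \<in> C ?P" using w by (simp add: C_def)
    ultimately show "\<omega> \<in> (\<Union>Ps\<in>S. C Ps)" by blast
  next
    fix \<omega> assume "\<omega> \<in> (\<Union>Ps\<in>S. C Ps)"
    then obtain Ps where "Ps \<in> S" "\<omega> \<in> C Ps" by blast
    then show "\<omega> \<in> {\<omega>\<in>space M. G (\<lambda>i. Xi i \<omega>)}"
      using loc[of Ps "\<lambda>i. Xi i \<omega>"] by (auto simp: S_def C_def)
  qed
  have eqD: "{\<omega>\<in>space M. G (\<lambda>i. Xi i \<omega>) \<and> (\<forall>r\<in>{1..lam}. Xi (k + r) \<omega> = Xs r)} = (\<Union>Ps\<in>S. D Ps)"
  proof -
    have "{\<omega>\<in>space M. G (\<lambda>i. Xi i \<omega>) \<and> (\<forall>r\<in>{1..lam}. Xi (k + r) \<omega> = Xs r)} =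
          {\<omega>\<in>space M. G (\<lambda>i. Xi i \<omega>)} \<inter> Bset" by (auto simp: Bset_def)
    also have "\<dots> = (\<Union>Ps\<in>S. C Ps) \<inter> Bset" by (simp only: eqC)
    also have "\<dots> = (\<Union>Ps\<in>S. D Ps)" by (auto simp: D_def)
    finally show ?thesis .
  qed
  have disjC: "disjoint_family_on C S"
    unfolding disjoint_family_on_def
  proof (intro ballI impI)
    fix P Q assume PQ: "P \<in> S" "Q \<in> S" "P \<noteq> Q"
    have "\<exists>i. P i \<noteq> Q i" using PQ(3) by (metis ext)
    then obtain i where i: "P i \<noteq> Q i" by (rule exE)
    have "i \<le> k"
    proof (rule ccontr)
      assume "\<not> i \<le> k"
      have PQ': "P \<in> Pi\<^sub>E {..k} (\<lambda>_. XX)" "Q \<in> Pi\<^sub>E {..k} (\<lambda>_. XX)"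
        using PQ(1,2) unfolding S_def by blast+
      have ik: "i \<notin> {..k}" using \<open>\<not> i \<le> k\<close> by simp
      have "P i = undefined" by (rule PiE_arb[OF PQ'(1) ik])
      moreover have "Q i = undefined" by (rule PiE_arb[OF PQ'(2) ik])
      ultimately show False using i by simp
    qed
    then show "C P \<inter> C Q = {}" using i by (auto simp: C_def)
  qed
  have disjD: "disjoint_family_on D S"
    using disjC unfolding disjoint_family_on_def D_def by blast
  have "pmin * measure M {\<omega>\<in>space M. G (\<lambda>i. Xi i \<omega>)} = pmin * (\<Sum>Ps\<in>S. measure M (C Ps))"
    unfolding eqC using finS Cs disjC by (subst measure_finite_Union) auto
  also have "\<dots> = (\<Sum>Ps\<in>S. pmin * measure M (C Ps))" by (simp add: sum_distrib_left)
  also have "\<dots> \<le> (\<Sum>Ps\<in>S. measure M (D Ps))"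
  proof (intro sum_mono)
    fix Ps
    have "D Ps = {\<omega>\<in>space M. (\<forall>i\<le>k. Xi i \<omega> = Ps i) \<and> (\<forall>r\<in>{1..lam}. Xi (k + r) \<omega> = Xs r)}"
      by (auto simp: D_def C_def Bset_def)
    moreover have "C Ps = {\<omega>\<in>space M. \<forall>i\<le>k. Xi i \<omega> = Ps i}" by (auto simp: C_def)
    ultimately show "pmin * measure M (C Ps) \<le> measure M (D Ps)"
      using A3 by simp
  qed
  also have "\<dots> = measure M {\<omega>\<in>space M. G (\<lambda>i. Xi i \<omega>) \<and> (\<forall>r\<in>{1..lam}. Xi (k + r) \<omega> = Xs r)}"
    unfolding eqD using finS Ds disjD by (subst measure_finite_Union) auto
  finally show ?thesis .
qed

lemma (in prob_space) blocks_io: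
  fixes Xi :: "nat \<Rightarrow> 'a \<Rightarrow> rmat"
  assumes XX_fin: "finite XX"
    and Xi_vals: "\<forall>k. \<forall>\<omega>\<in>space M. Xi k \<omega> \<in> XX"
    and Xi_meas: "\<forall>k A. {\<omega>\<in>space M. Xi k \<omega> = A} \<in> sets M"
    and A3: "\<forall>k (Ps :: nat \<Rightarrow> rmat).
       measure M {\<omega>\<in>space M. (\<forall>i\<le>k. Xi i \<omega> = Ps i) \<and> (\<forall>r\<in>{1..lam}. Xi (k + r) \<omega> = Xs r)}
         \<ge> pmin * measure M {\<omega>\<in>space M. \<forall>i\<le>k. Xi i \<omega> = Ps i}"
    and pmin: "pmin > 0"
  shows "AE \<omega> in M. \<forall>k0. \<exists>k\<ge>k0. \<forall>r\<in>{1..lam}. Xi (k + r) \<omega> = Xs r"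
proof -
  define blk where "blk k \<omega> \<longleftrightarrow> (\<forall>r\<in>{1..lam}. Xi (k + r) \<omega> = Xs r)" for k \<omega>
  define Bs where "Bs k = {\<omega>\<in>space M. blk k \<omega>}" for k
  have Bss: "Bs k \<in> sets M" for k
    unfolding Bs_def blk_def using meas_fin[OF Xi_meas, of "{1..lam}" "\<lambda>r. k + r" Xs] by simp
  define q where "q = max 0 (1 - pmin)"
  have q: "0 \<le> q" "q < 1" using pmin by (auto simp: q_def)
  define F where "F k0 m = {\<omega>\<in>space M. \<forall>t<m. \<not> blk (k0 + t * lam) \<omega>}" for k0 m
  have Fs: "F k0 m \<in> sets M" for k0 m
  proof (induction m)
    case 0
    have "F k0 0 = space M" by (auto simp: F_def)
    then show ?case by simp
  next
    case (Suc m)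
    have "F k0 (Suc m) = F k0 m - Bs (k0 + m * lam)"
      by (auto simp: F_def Bs_def less_Suc_eq)
    then show ?case using Suc Bss by auto
  qed
  have Fm: "measure M (F k0 m) \<le> q ^ m" for k0 m
  proof (induction m)
    case 0 then show ?case by simp
  next
    case (Suc m)
    define G where "G P \<longleftrightarrow> (\<forall>t<m. \<not> (\<forall>r\<in>{1..lam}. P (k0 + t * lam + r) = Xs r))" for P :: "nat \<Rightarrow> rmat"
    have loc: "G P = G Q" if "\<forall>i\<le>k0 + m * lam. P i = Q i" for P Q
    proof -
      have "P (k0 + t * lam + r) = Q (k0 + t * lam + r)" if "t < m" "r \<in> {1..lam}" for t r
      proof -
        have "t * lam + lam \<le> m * lam" using \<open>t < m\<close>
          by (metis Suc_leI add.commute mult_Suc mult_le_mono1)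
        then have "k0 + t * lam + r \<le> k0 + m * lam" using \<open>r \<in> {1..lam}\<close> by auto
        then show ?thesis using \<open>\<forall>i\<le>k0 + m * lam. P i = Q i\<close> by blast
      qed
      then show ?thesis unfolding G_def by auto
    qed
    have FG: "F k0 m = {\<omega>\<in>space M. G (\<lambda>i. Xi i \<omega>)}" by (auto simp: F_def G_def blk_def)
    have FB: "{\<omega>\<in>space M. G (\<lambda>i. Xi i \<omega>)} \<inter> Bs (k0 + m * lam) =
        {\<omega>\<in>space M. G (\<lambda>i. Xi i \<omega>) \<and> (\<forall>r\<in>{1..lam}. Xi (k0 + m * lam + r) \<omega> = Xs r)}"
      by (auto simp: F_def G_def blk_def Bs_def)
    have cs: "measure M (F k0 m \<inter> Bs (k0 + m * lam)) \<ge> pmin * measure M (F k0 m)"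
      unfolding FG unfolding FB by (rule cond_step[OF XX_fin Xi_vals Xi_meas A3 pmin loc]) auto
    have "F k0 (Suc m) = F k0 m - Bs (k0 + m * lam)"
      by (auto simp: F_def Bs_def less_Suc_eq)
    then have "measure M (F k0 (Suc m)) = measure M (F k0 m) - measure M (F k0 m \<inter> Bs (k0 + m * lam))"
      using Fs Bss by (simp add: finite_measure_Diff')
    also have "\<dots> \<le> (1 - pmin) * measure M (F k0 m)" using cs by (simp add: algebra_simps)
    also have "\<dots> \<le> q * measure M (F k0 m)" by (intro mult_right_mono) (auto simp: q_def)
    also have "\<dots> \<le> q * q ^ m" using Suc q by (intro mult_left_mono) auto
    finally show ?case by simp
  qed
  define Nk where "Nk k0 = (\<Inter>m. F k0 m)" for k0
  have Nks: "Nk k0 \<in> sets M" for k0 unfolding Nk_def using Fs by auto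
  have Nk0: "measure M (Nk k0) = 0" for k0
  proof -
    have "measure M (Nk k0) \<le> e" if e: "e > 0" for e
    proof -
      obtain m where m: "q ^ m < e" using real_arch_pow_inv[OF e q(2)] by blast
      have "measure M (Nk k0) \<le> measure M (F k0 m)"
        by (rule finite_measure_mono) (auto simp: Nk_def Fs)
      then show ?thesis using Fm[of k0 m] m by simp
    qed
    then have "measure M (Nk k0) \<le> 0" by (meson dense not_le)
    then show ?thesis by (simp add: measure_le_0_iff)
  qed
  have null: "(\<Union>k0. Nk k0) \<in> null_sets M"
    using Nks Nk0 by (intro null_sets_UN) (simp add: null_sets_def emeasure_eq_measure)
  show ?thesis
  proof (rule AE_I'[OF null], intro subsetI)
    fix \<omega> assume "\<omega> \<in> {\<omega>\<in>space M. \<not> (\<forall>k0. \<exists>k\<ge>k0. \<forall>r\<in>{1..lam}. Xi (k + r) \<omega> = Xs r)}"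
    then obtain k0 where w: "\<omega> \<in> space M" "\<forall>k\<ge>k0. \<not> blk k \<omega>" by (auto simp: blk_def)
    have "\<omega> \<in> F k0 m" for m unfolding F_def using w(1) w(2)[rule_format, OF le_add1] by blast
    then have "\<omega> \<in> Nk k0" by (simp add: Nk_def)
    then show "\<omega> \<in> (\<Union>k0. Nk k0)" by blast
  qed
qed


theorem theorem1:
  fixes M :: "'a measure"
    and n :: nat and E :: "(nat \<times> nat) set" and tau :: nat and ntil :: nat
    and x0 :: "nat \<Rightarrow> real"
    and Xi :: "nat \<Rightarrow> 'a \<Rightarrow> rmat"
    and XX :: "rmat set"
    and lam :: nat and Xs :: "nat \<Rightarrow> rmat" and pmin :: real and c :: real
  assumes M: "prob_space M"
    and n_pos: "n \<ge> 1"
    and G: "strongly_connected n E"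
    and ntil_def: "ntil = card E * (tau + 1) + n"
    and c_def: "c = Min ((\<lambda>j. 1 / (1 + real (out_deg E j))) ` {0..<n})"
    \<comment> \<open>(A1)\<close>
    and XX_fin: "finite XX"
    and XX_stoch: "\<forall>A\<in>XX. nonneg_col_stochastic ntil A"
    and XX_entries: "\<forall>A\<in>XX. \<forall>l i. A l i = 0 \<or> A l i = 1 \<or>
                        (\<exists>j<n. A l i = 1 / (1 + real (out_deg E j)))"
    and Xi_vals: "\<forall>k. \<forall>\<omega>\<in>space M. Xi k \<omega> \<in> XX"
    and Xi_meas: "\<forall>k A. {\<omega>\<in>space M. Xi k \<omega> = A} \<in> sets M"
    \<comment> \<open>(A2)\<close>
    and lam_pos: "lam \<ge> 1"
    and Xs_in: "\<forall>r\<in>{1..lam}. Xs r \<in> XX"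
    and L_pos: "\<forall>j<n. \<forall>i<ntil. mat_prod ntil Xs lam j i > 0"
    and pmin_pos: "pmin > 0"
    \<comment> \<open>(A3): conditional probability given the past realisations, stated elementarily\<close>
    and A3: "\<forall>k (Ps :: nat \<Rightarrow> rmat).
       measure M {\<omega>\<in>space M. (\<forall>i\<le>k. Xi i \<omega> = Ps i) \<and> (\<forall>r\<in>{1..lam}. Xi (k + r) \<omega> = Xs r)}
         \<ge> pmin * measure M {\<omega>\<in>space M. \<forall>i\<le>k. Xi i \<omega> = Ps i}"
  shows "AE \<omega> in M. \<forall>j<n.
     (let xt = (\<lambda>k. aug_iter ntil Xi (\<lambda>l. if l < n then x0 l else 0) k \<omega>);
          yt = (\<lambda>k. aug_iter ntil Xi (\<lambda>l. if l < n then 1 else 0) k \<omega>);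
          K = {k. yt k j \<ge> c ^ lam}
      in infinite K \<and>
         ((\<lambda>k. xt k j / yt k j) \<longlongrightarrow> (\<Sum>i<n. x0 i) / real n) (inf sequentially (principal K)))"
proof -
  interpret P: prob_space M by (rule M)
  define g where "g = c ^ lam"
  let ?S = "(\<lambda>j. 1 / (1 + real (out_deg E j))) ` {0..<n}"
  have Sfin: "finite ?S" and Sne: "?S \<noteq> {}" using n_pos by auto
  have "c \<in> ?S" unfolding c_def by (rule Min_in[OF Sfin Sne])
  then obtain j0 where cj: "c = 1 / (1 + real (out_deg E j0))" by auto
  have c0: "0 < c" unfolding cj by simp
  have c1: "c \<le> 1" unfolding cj by simp
  have cle: "c \<le> 1 / (1 + real (out_deg E j))" if "j < n" for j
    unfolding c_def using that by (intro Min_le[OF Sfin]) auto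
  have entries: "A l i = 0 \<or> c \<le> A l i" if "A \<in> XX" for A l i
  proof -
    have "A l i = 0 \<or> A l i = 1 \<or> (\<exists>j<n. A l i = 1 / (1 + real (out_deg E j)))"
      using XX_entries that by blast
    then show ?thesis using c1 cle by auto
  qed
  have g0: "0 < g" and g1: "g \<le> 1" using c0 c1 by (auto simp: g_def power_le_one)
  have Xs_prop: "\<forall>r\<in>{1..lam}. nonneg_col_stochastic ntil (Xs r) \<and> (\<forall>l i. Xs r l i = 0 \<or> c \<le> Xs r l i)"
    using Xs_in XX_stoch entries by blast
  have ncsX: "\<forall>r\<in>{1..lam}. nonneg_col_stochastic ntil (Xs r)" using Xs_prop by blast
  have Lrow: "\<forall>j<n. \<forall>i<ntil. g \<le> mat_prod ntil Xs lam j i"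
  proof (intro allI impI)
    fix j i assume "j < n" "i < ntil"
    then have "mat_prod ntil Xs lam j i > 0" using L_pos by blast
    then show "g \<le> mat_prod ntil Xs lam j i"
      using prod_entries[OF c0 c1 Xs_prop, of j i] unfolding g_def by auto
  qed
  have nN: "n \<le> ntil" using ntil_def by simp
  have AEb: "AE \<omega> in M. \<forall>k0. \<exists>k\<ge>k0. \<forall>r\<in>{1..lam}. Xi (k + r) \<omega> = Xs r"
    by (rule P.blocks_io[OF XX_fin Xi_vals Xi_meas A3 pmin_pos])
  show ?thesis
    using AEb AE_space
  proof eventually_elim
    case (elim \<omega>)
    have ncsB: "nonneg_col_stochastic ntil ((\<lambda>k. Xi k \<omega>) k)" for k
      using Xi_vals XX_stoch elim(2) by blast
    have blk: "\<forall>k0. \<exists>k\<ge>k0. \<forall>r<lam. Xi (Suc k + r) \<omega> = Xs (Suc r)"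
    proof
      fix k0
      obtain k where k: "k \<ge> k0" "\<forall>r\<in>{1..lam}. Xi (k + r) \<omega> = Xs r" using elim(1) by blast
      have "\<forall>r<lam. Xi (Suc k + r) \<omega> = Xs (Suc r)"
      proof (intro allI impI)
        fix r assume "r < lam"
        then have "Suc r \<in> {1..lam}" by simp
        then have "Xi (k + Suc r) \<omega> = Xs (Suc r)" using k(2) by blast
        then show "Xi (Suc k + r) \<omega> = Xs (Suc r)" by simp
      qed
      then show "\<exists>k\<ge>k0. \<forall>r<lam. Xi (Suc k + r) \<omega> = Xs (Suc r)" using k(1) by blast
    qed
    show ?case
      unfolding Let_def aug_itr g_def[symmetric]
    proof (intro allI impI)
      fix j assume j: "j < n"
      show "infinite {k. g \<le> itr ntil (\<lambda>k. Xi k \<omega>) (\<lambda>l. if l < ntil then if l < n then 1 else 0 else 0) k j} \<and>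
        ((\<lambda>k. itr ntil (\<lambda>k. Xi k \<omega>) (\<lambda>l. if l < ntil then if l < n then x0 l else 0 else 0) k j /
              itr ntil (\<lambda>k. Xi k \<omega>) (\<lambda>l. if l < ntil then if l < n then 1 else 0 else 0) k j)
          \<longlongrightarrow> (\<Sum>i<n. x0 i) / real n)
         (inf sequentially
           (principal {k. g \<le> itr ntil (\<lambda>k. Xi k \<omega>) (\<lambda>l. if l < ntil then if l < n then 1 else 0 else 0) k j}))"
        by (rule determ[OF ncsB ncsX Lrow g0 g1 n_pos nN blk j refl refl])
    qed
  qed
qed

end
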